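(* Consider the CoDGraD iteration described below. Assume that ${\bf A}_{\rm sde}$ has $1$ as a simple eigenvalue and all other eigenvalues in the open unit disk, and that there is $L>0$ with $\|\nabla g_i({\bf x})-\nabla g_i({\bf y})\|_2\le L\|{\bf x}-{\bf y}\|_2$ for all ${\bf x},{\bf y}\in\mathbb{R}^N$, $1\le i\le n$. Then for every $k\ge0$, $$\Big\|\sum_{i=1}^n(a_i-a_{n+i})\nabla g_i({\bf x}_i(k))-\tilde w\,\nabla f(\bar{\bf x}(k))\Big\|_2\le L\Big(\sum_{i=1}^{2n}|a_i|\Big)\max_{1\le i\le n}\|{\bf x}_i(k)-\bar{\bf x}(k)\|_2.$$
   Context: Setting: $f_1,\dots,f_m:\mathbb{R}^N\to\mathbb{R}$, $f=\sum_l f_l$; ${\bf B}=(b(i,l))$ real $n\times m$, ${\bf A}=(a(i,j))$ real $n\times n$ with ${\bf A}{\bf B}={\bf 1}_{n\times m}$ (all-ones); $g_i=\sum_l b(i,l)f_l$ differentiable (so $f=\sum_j a(i,j)g_j$ for each $i$). Let $t_+=\max(t,0)$, $w_i=\big(\sum_j|a(i,j)|\big)^{-1}$, $\tilde a(i,j)=w_ia(i,j)$, $\tilde{\bf A}_\pm=\big((\pm\tilde a(i,j))_+\big)$, ${\bf A}_{\rm sde}=\begin{pmatrix}\tilde{\bf A}_+&\tilde{\bf A}_-\\ \tilde{\bf A}_+&\tilde{\bf A}_-\end{pmatrix}$. CoDGraD iteration: positive step sizes $\alpha_k$, arbitrary ${\bf x}_i(0)\in\mathbb{R}^N$, and for $k\ge0$: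 ${\bf y}_i^\pm(k)={\bf x}_i(k)\mp\alpha_k\nabla g_i({\bf x}_i(k))$, ${\bf x}_i(k+1)=\sum_{j=1}^n w_i\{(a(i,j))_+{\bf y}_j^+(k)+(-a(i,j))_+{\bf y}_j^-(k)\}$. Let ${\bf a}_{\rm sde}=(a_1,\dots,a_{2n})^T$ be the unique vector with ${\bf a}_{\rm sde}^T{\bf A}_{\rm sde}={\bf a}_{\rm sde}^T$ and $\sum_i a_i=1$; $\bar{\bf x}(k)=\sum_{i=1}^n(a_i+a_{n+i}){\bf x}_i(k)$; $\tilde w=\sum_{i=1}^n(a_i+a_{n+i})w_i$. *)

theory Defs
  imports "HOL-Analysis.Analysis" "Jordan_Normal_Form.Determinant" "Jordan_Normal_Form.Char_Poly"
begin

text \<open>Indices are 0-based: i,j < n, l < m, p,q < 2n. Matrices are functions nat => nat => real.\<close>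

definition pos_part :: "real \<Rightarrow> real" where
  "pos_part t = max t 0"

definition wgt :: "nat \<Rightarrow> (nat \<Rightarrow> nat \<Rightarrow> real) \<Rightarrow> nat \<Rightarrow> real" where
  "wgt n A i = inverse (\<Sum>j<n. \<bar>A i j\<bar>)"

text \<open>The 2n x 2n matrix A_sde = [[A~+, A~-],[A~+, A~-]] with A~+- = ((+- w_i a(i,j))_+).\<close>
definition A_sde :: "nat \<Rightarrow> (nat \<Rightarrow> nat \<Rightarrow> real) \<Rightarrow> nat \<Rightarrow> nat \<Rightarrow> real" where
  "A_sde n A p q =
     (let i = p mod n in
      if q < n then pos_part (wgt n A i * A i q)
      else pos_part (- (wgt n A i * A i (q - n))))"

definition A_sde_mat :: "nat \<Rightarrow> (nat \<Rightarrow> nat \<Rightarrow> real) \<Rightarrow> complex Matrix.mat" where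
  "A_sde_mat n A = Matrix.mat (2*n) (2*n) (\<lambda>(p,q). complex_of_real (A_sde n A p q))"

definition grad :: "('v::euclidean_space \<Rightarrow> real) \<Rightarrow> 'v \<Rightarrow> 'v" where
  "grad h x = (THE D. GDERIV h x :> D)"

end

theory Submission
  imports Defs
begin


lemma grad_works:
  fixes h :: "'v::euclidean_space \<Rightarrow> real"
  assumes "h differentiable (at x)"
  shows "GDERIV h x :> grad h x"
proof -
  obtain f' where f': "(h has_derivative f') (at x)" using assms differentiable_def by blast
  have lin: "linear f'" using f' has_derivative_linear by blast
  define D where "D = (\<Sum>b\<in>Basis. f' b *\<^sub>R b)"
  have eq: "f' v = inner v D" for v
  proof -
    have "f' v = f' (\<Sum>b\<in>Basis. (v \<bullet> b) *\<^sub>R b)" by (simp add: euclidean_representation)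
    also have "\<dots> = (\<Sum>b\<in>Basis. (v \<bullet> b) * f' b)"
      using lin by (simp add: linear_sum linear_scale)
    also have "\<dots> = inner v D" by (simp add: D_def inner_sum_right mult.commute)
    finally show ?thesis .
  qed
  have ex: "GDERIV h x :> D" unfolding gderiv_def using f' eq
    by (metis (no_types, lifting) ext)
  have un: "D' = D" if "GDERIV h x :> D'" for D'
  proof -
    have "(\<lambda>v. inner v D') = (\<lambda>v. inner v D)"
      using has_derivative_unique that ex unfolding gderiv_def by blast
    hence "inner (D' - D) (D' - D) = 0" by (metis inner_diff_left inner_diff_right cancel_comm_monoid_add_class.diff_cancel)
    thus ?thesis by simp
  qed
  have "grad h x = D" unfolding grad_def using ex un by (rule the_equality)
  thus ?thesis using ex by simp
qed

lemma inner_fun_eq: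
  fixes a b :: "'v::real_inner"
  assumes "(\<lambda>v. inner v a) = (\<lambda>v. inner v b)"
  shows "a = b"
proof -
  have "inner (a - b) a = inner (a - b) b" using fun_cong[OF assms, of "a - b"] by simp
  hence "inner (a - b) (a - b) = 0" by (simp only: inner_diff_right)
  thus ?thesis by simp
qed

lemma grad_sum:
  fixes h :: "nat \<Rightarrow> 'v::euclidean_space \<Rightarrow> real"
  assumes "finite I" "\<forall>i\<in>I. h i differentiable (at x)"
  shows "grad (\<lambda>z. \<Sum>i\<in>I. c i * h i z) x = (\<Sum>i\<in>I. c i *\<^sub>R grad (h i) x)"
proof -
  have hd: "(h i has_derivative (\<lambda>v. inner v (grad (h i) x))) (at x)" if "i \<in> I" for i
  proof -
    have "GDERIV (h i) x :> grad (h i) x" using grad_works assms(2) that by blast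
    thus ?thesis by (simp only: gderiv_def)
  qed
  have d: "((\<lambda>z. \<Sum>i\<in>I. c i * h i z) has_derivative (\<lambda>v. \<Sum>i\<in>I. c i * inner v (grad (h i) x))) (at x)"
    by (rule has_derivative_sum, rule has_derivative_mult_right, rule hd)
  have fe: "(\<lambda>v. \<Sum>i\<in>I. c i * inner v (grad (h i) x)) = (\<lambda>v. inner v (\<Sum>i\<in>I. c i *\<^sub>R grad (h i) x))"
    by (simp add: inner_sum_right)
  have dd: "(\<lambda>z. \<Sum>i\<in>I. c i * h i z) differentiable (at x)" using d unfolding differentiable_def by blast
  have d2: "((\<lambda>z. \<Sum>i\<in>I. c i * h i z) has_derivative (\<lambda>v. inner v (grad (\<lambda>z. \<Sum>i\<in>I. c i * h i z) x))) (at x)"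
    using grad_works[OF dd] by (simp only: gderiv_def)
  have "(\<lambda>v. inner v (grad (\<lambda>z. \<Sum>i\<in>I. c i * h i z) x)) = (\<lambda>v. \<Sum>i\<in>I. c i * inner v (grad (h i) x))"
    by (rule has_derivative_unique[OF d2 d])
  then show ?thesis unfolding fe by (rule inner_fun_eq)
qed

lemma sum_2n: "(\<Sum>p<2*n. F p) = (\<Sum>i<n. F i) + (\<Sum>i<n. F (n+i))" for F :: "nat \<Rightarrow> 'a::comm_monoid_add"
proof -
  have "(\<Sum>p<2*n. F p) = sum F {0..<n+n}" by (simp add: lessThan_atLeast0 mult_2)
  also have "\<dots> = sum F {0..<n} + sum F {0+n..<n+n}"
    by (simp add: sum.atLeastLessThan_concat)
  also have "sum F {0+n..<n+n} = (\<Sum>i\<in>{0..<n}. F (i+n))" by (rule sum.shift_bounds_nat_ivl)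
  finally show ?thesis by (simp add: lessThan_atLeast0 add.commute)
qed



theorem proposition5:
  fixes n m :: nat
    and fl :: "nat \<Rightarrow> 'v::euclidean_space \<Rightarrow> real"
    and B A :: "nat \<Rightarrow> nat \<Rightarrow> real"
    and \<alpha> :: "nat \<Rightarrow> real"
    and x :: "nat \<Rightarrow> nat \<Rightarrow> 'v"
    and a :: "nat \<Rightarrow> real"
    and L :: real
  defines "f \<equiv> (\<lambda>z. \<Sum>l<m. fl l z)"
    and "g \<equiv> (\<lambda>i z. \<Sum>l<m. B i l * fl l z)"
  assumes n_pos: "0 < n" and m_pos: "0 < m"
    and AB: "\<forall>i<n. \<forall>l<m. (\<Sum>j<n. A i j * B j l) = 1"
    and g_diff: "\<forall>i<n. \<forall>z. g i differentiable (at z)"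
    and simple_one: "order 1 (char_poly (A_sde_mat n A)) = 1"
    and others_in_disk: "\<forall>z. poly (char_poly (A_sde_mat n A)) z = 0 \<longrightarrow> z \<noteq> 1 \<longrightarrow> cmod z < 1"
    and L_pos: "0 < L"
    and Lip: "\<forall>i<n. \<forall>y z. norm (grad (g i) y - grad (g i) z) \<le> L * norm (y - z)"
    and step_pos: "\<forall>k. 0 < \<alpha> k"
    and iter: "\<forall>k. \<forall>i<n. x (Suc k) i =
        (\<Sum>j<n. wgt n A i *\<^sub>R
           (pos_part (A i j) *\<^sub>R (x k j - \<alpha> k *\<^sub>R grad (g j) (x k j))
            + pos_part (- A i j) *\<^sub>R (x k j + \<alpha> k *\<^sub>R grad (g j) (x k j))))"
    and a_left: "\<forall>q<2*n. (\<Sum>p<2*n. a p * A_sde n A p q) = a q"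
    and a_sum: "(\<Sum>p<2*n. a p) = 1"
  shows "\<forall>k. norm ((\<Sum>i<n. (a i - a (n+i)) *\<^sub>R grad (g i) (x k i))
              - (\<Sum>i<n. (a i + a (n+i)) * wgt n A i) *\<^sub>R
                  grad f (\<Sum>i<n. (a i + a (n+i)) *\<^sub>R x k i))
           \<le> L * (\<Sum>p<2*n. \<bar>a p\<bar>) *
             (MAX i\<in>{..<n}. norm (x k i - (\<Sum>j<n. (a j + a (n+j)) *\<^sub>R x k j)))"
proof (intro allI)
  fix k
  define c where "c i = a i + a (n+i)" for i
  define xb where "xb = (\<Sum>j<n. c j *\<^sub>R x k j)"
  define G where "G q = grad (g q) xb" for q
  define M where "M = (MAX i\<in>{..<n}. norm (x k i - xb))"
  have fid: "f = (\<lambda>z. \<Sum>q<n. A i q * g q z)" if "i < n" for i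
  proof
    fix z
    have "(\<Sum>q<n. A i q * g q z) = (\<Sum>q<n. \<Sum>l<m. A i q * (B q l * fl l z))"
      unfolding g_def by (simp only: sum_distrib_left)
    also have "\<dots> = (\<Sum>l<m. \<Sum>q<n. A i q * (B q l * fl l z))"
      by (rule sum.swap[where g="\<lambda>q l. A i q * (B q l * fl l z)" and A="{..<n}" and B="{..<m}"])
    also have "\<dots> = (\<Sum>l<m. (\<Sum>q<n. A i q * B q l) * fl l z)"
      by (simp only: sum_distrib_right mult.assoc)
    also have "\<dots> = (\<Sum>l<m. fl l z)"
      by (rule sum.cong) (use AB that in auto)
    finally show "f z = (\<Sum>q<n. A i q * g q z)" unfolding f_def by (rule sym)
  qed
  have gradf: "grad f xb = (\<Sum>q<n. A i q *\<^sub>R G q)" if "i < n" for i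
    unfolding fid[OF that] G_def by (rule grad_sum) (use g_diff in auto)
  have pp: "pos_part t - pos_part (- t) = t" for t unfolding pos_part_def by auto
  have adiff: "a q - a (n+q) = (\<Sum>i<n. c i * wgt n A i * A i q)" if "q < n" for q
  proof -
    have As1: "A_sde n A i q = pos_part (wgt n A i * A i q)" if "i < n" for i
      using that \<open>q < n\<close> unfolding A_sde_def Let_def by simp
    have As2: "A_sde n A (n+i) q = pos_part (wgt n A i * A i q)" if "i < n" for i
      using that \<open>q < n\<close> unfolding A_sde_def Let_def by simp
    have As3: "A_sde n A i (n+q) = pos_part (- (wgt n A i * A i q))" if "i < n" for i
      using that \<open>q < n\<close> unfolding A_sde_def Let_def by simp
    have As4: "A_sde n A (n+i) (n+q) = pos_part (- (wgt n A i * A i q))" if "i < n" for i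
      using that \<open>q < n\<close> unfolding A_sde_def Let_def by simp
    have "a q = (\<Sum>p<2*n. a p * A_sde n A p q)" using a_left that by simp
    also have "\<dots> = (\<Sum>i<n. a i * A_sde n A i q) + (\<Sum>i<n. a (n+i) * A_sde n A (n+i) q)"
      by (rule sum_2n)
    also have "\<dots> = (\<Sum>i<n. a i * pos_part (wgt n A i * A i q)) + (\<Sum>i<n. a (n+i) * pos_part (wgt n A i * A i q))"
      by (intro arg_cong2[where f="(+)"] sum.cong) (simp_all add: As1 As2)
    also have "\<dots> = (\<Sum>i<n. c i * pos_part (wgt n A i * A i q))"
      unfolding c_def by (simp only: distrib_right sum.distrib)
    finally have e1: "a q = (\<Sum>i<n. c i * pos_part (wgt n A i * A i q))" .
    have "a (n+q) = (\<Sum>p<2*n. a p * A_sde n A p (n+q))" using a_left that by simp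
    also have "\<dots> = (\<Sum>i<n. a i * A_sde n A i (n+q)) + (\<Sum>i<n. a (n+i) * A_sde n A (n+i) (n+q))"
      by (rule sum_2n)
    also have "\<dots> = (\<Sum>i<n. a i * pos_part (- (wgt n A i * A i q))) + (\<Sum>i<n. a (n+i) * pos_part (- (wgt n A i * A i q)))"
      by (intro arg_cong2[where f="(+)"] sum.cong) (simp_all add: As3 As4)
    also have "\<dots> = (\<Sum>i<n. c i * pos_part (- (wgt n A i * A i q)))"
      unfolding c_def by (simp only: distrib_right sum.distrib)
    finally have e2: "a (n+q) = (\<Sum>i<n. c i * pos_part (- (wgt n A i * A i q)))" .
    have "a q - a (n+q) = (\<Sum>i<n. c i * (pos_part (wgt n A i * A i q) - pos_part (- (wgt n A i * A i q))))"
      unfolding e1 e2 by (simp add: sum_subtractf right_diff_distrib)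
    thus ?thesis by (simp add: pp mult.assoc)
  qed
  have key: "(\<Sum>q<n. (a q - a (n+q)) *\<^sub>R G q) = (\<Sum>i<n. c i * wgt n A i) *\<^sub>R grad f xb"
  proof -
    have "(\<Sum>q<n. (a q - a (n+q)) *\<^sub>R G q) = (\<Sum>q<n. \<Sum>i<n. (c i * wgt n A i) *\<^sub>R (A i q *\<^sub>R G q))"
      by (simp add: adiff scaleR_sum_left)
    also have "\<dots> = (\<Sum>i<n. \<Sum>q<n. (c i * wgt n A i) *\<^sub>R (A i q *\<^sub>R G q))"
      by (rule sum.swap[where g="\<lambda>q i. (c i * wgt n A i) *\<^sub>R (A i q *\<^sub>R G q)" and A="{..<n}" and B="{..<n}"])
    also have "\<dots> = (\<Sum>i<n. (c i * wgt n A i) *\<^sub>R (\<Sum>q<n. A i q *\<^sub>R G q))"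
      by (simp only: scaleR_sum_right)
    also have "\<dots> = (\<Sum>i<n. (c i * wgt n A i) *\<^sub>R grad f xb)"
      by (rule sum.cong) (simp_all add: gradf)
    also have "\<dots> = (\<Sum>i<n. c i * wgt n A i) *\<^sub>R grad f xb" by (simp add: scaleR_sum_left)
    finally show ?thesis .
  qed
  have Mge: "norm (x k i - xb) \<le> M" if "i < n" for i
    unfolding M_def using that by (intro Max_ge) auto
  have eqd: "(\<Sum>i<n. (a i - a (n+i)) *\<^sub>R grad (g i) (x k i)) - (\<Sum>i<n. c i * wgt n A i) *\<^sub>R grad f xb
      = (\<Sum>i<n. (a i - a (n+i)) *\<^sub>R (grad (g i) (x k i) - G i))"
    unfolding key[symmetric] by (simp add: sum_subtractf scaleR_diff_right)
  have "norm ((\<Sum>i<n. (a i - a (n+i)) *\<^sub>R grad (g i) (x k i)) - (\<Sum>i<n. c i * wgt n A i) *\<^sub>R grad f xb)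
      \<le> (\<Sum>i<n. norm ((a i - a (n+i)) *\<^sub>R (grad (g i) (x k i) - G i)))"
    unfolding eqd by (rule norm_sum)
  also have "\<dots> \<le> (\<Sum>i<n. (\<bar>a i\<bar> + \<bar>a (n+i)\<bar>) * (L * M))"
  proof (rule sum_mono)
    fix i assume "i \<in> {..<n}"
    hence i: "i < n" by simp
    have "norm (grad (g i) (x k i) - G i) \<le> L * norm (x k i - xb)"
      unfolding G_def using Lip i by blast
    also have "\<dots> \<le> L * M" using Mge[OF i] L_pos by simp
    finally have h: "norm (grad (g i) (x k i) - G i) \<le> L * M" .
    have "norm ((a i - a (n+i)) *\<^sub>R (grad (g i) (x k i) - G i)) = \<bar>a i - a (n+i)\<bar> * norm (grad (g i) (x k i) - G i)"
      by simp
    also have "\<dots> \<le> (\<bar>a i\<bar> + \<bar>a (n+i)\<bar>) * (L * M)"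
      by (rule mult_mono) (use h in auto)
    finally show "norm ((a i - a (n+i)) *\<^sub>R (grad (g i) (x k i) - G i)) \<le> (\<bar>a i\<bar> + \<bar>a (n+i)\<bar>) * (L * M)" .
  qed
  also have "\<dots> = (\<Sum>i<n. \<bar>a i\<bar> + \<bar>a (n+i)\<bar>) * (L * M)"
    by (simp add: sum_distrib_right)
  also have "\<dots> = (\<Sum>p<2*n. \<bar>a p\<bar>) * (L * M)"
    by (simp only: sum_2n sum.distrib)
  also have "\<dots> = L * (\<Sum>p<2*n. \<bar>a p\<bar>) * M"
    by (simp only: mult_ac)
  finally have fin: "norm ((\<Sum>i<n. (a i - a (n+i)) *\<^sub>R grad (g i) (x k i)) - (\<Sum>i<n. c i * wgt n A i) *\<^sub>R grad f xb)
      \<le> L * (\<Sum>p<2*n. \<bar>a p\<bar>) * M" .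
  show "norm ((\<Sum>i<n. (a i - a (n+i)) *\<^sub>R grad (g i) (x k i))
              - (\<Sum>i<n. (a i + a (n+i)) * wgt n A i) *\<^sub>R
                  grad f (\<Sum>i<n. (a i + a (n+i)) *\<^sub>R x k i))
           \<le> L * (\<Sum>p<2*n. \<bar>a p\<bar>) *
             (MAX i\<in>{..<n}. norm (x k i - (\<Sum>j<n. (a j + a (n+j)) *\<^sub>R x k j)))"
    using fin unfolding M_def xb_def c_def .
qed

end
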